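(* Let $l$ be an even integer with $l\ge6$, and consider all strings $x\in B$ with $|x|=l$ and $\delta(x)=2$. Then: - if $l=4n$ (so $n\ge2$), the maximum of $s([x]_2)$ over these strings is $F_{4n}+F_{2n}^2$, attained at $x=(10)^n0(10)^{n-1}0$; - if $l=4n+2$ (so $n\ge1$), the maximum of $s([x]_2)$ over these strings is $F_{4n+2}+F_{2n}F_{2n+2}$, attained at $x=(10)^n0(10)^n0$.
   Context: Stern's sequence $(a(n))_{n\ge0}$: $a(0)=0$, $a(1)=1$, $a(2n)=a(n)$, $a(2n+1)=a(n)+a(n+1)$; $s(n)=a(n+1)$. For a binary string $x$, $[x]_2$ is the integer it represents in base 2 and $|x|$ its length. $B$ denotes the set of nonempty binary strings that are concatenations of blocks each equal to $10$ or $100$; for $x\in B$, $\delta(x)$ is the number of $0$s minus the number of $1$s in $x$, which equals the number of $100$ blocks. $x^i$ denotes $i$-fold concatenation. $F_n$ are the Fibonacci numbers ($F_0=0,F_1=1,F_n=F_{n-1}+F_{n-2}$). *)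

theory Defs
  imports Main "HOL-Number_Theory.Fib"
begin

function stern :: "nat \<Rightarrow> nat" where
  "stern n = (if n = 0 then 0 else if n = 1 then 1
              else if even n then stern (n div 2)
              else stern (n div 2) + stern (n div 2 + 1))"
  by auto
termination by (relation "measure id") (auto elim!: oddE)

declare stern.simps [simp del]

definition s_stern :: "nat \<Rightarrow> nat" where
  "s_stern n = stern (n + 1)"

text \<open>Binary strings as bool lists (True = 1, False = 0), most significant digit first.\<close>
definition bin_val :: "bool list \<Rightarrow> nat" where
  "bin_val x = foldl (\<lambda>acc b. 2 * acc + (if b then 1 else 0)) 0 x"

definition inB :: "bool list \<Rightarrow> bool" where
  "inB x \<longleftrightarrow> (\<exists>bs. bs \<noteq> [] \<and>
      (\<forall>b\<in>set bs. b = [True, False] \<or> b = [True, False, False]) \<and> x = concat bs)"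

definition delta :: "bool list \<Rightarrow> int" where
  "delta x = int (count_list x False) - int (count_list x True)"

definition pow_str :: "bool list \<Rightarrow> nat \<Rightarrow> bool list" where
  "pow_str w i = concat (replicate i w)"

end

theory Submission
  imports Defs
begin

definition stp :: "nat \<times> nat \<Rightarrow> bool \<Rightarrow> nat \<times> nat" where
  "stp st b = (case st of (p,q) \<Rightarrow> if b then (p+q,q) else (p,p+q))"

definition run :: "nat \<times> nat \<Rightarrow> bool list \<Rightarrow> nat \<times> nat" where
  "run st x = foldl stp st x"

lemma run_append[simp]: "run st (x@y) = run (run st x) y" by (simp add: run_def)
lemma run_Nil[simp]: "run st [] = st" by (simp add: run_def)
lemma run_Cons[simp]: "run st (b#x) = run (stp st b) x" by (simp add: run_def)

lemma stern_0[simp]: "stern 0 = 0" by (simp add: stern.simps)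
lemma stern_1[simp]: "stern 1 = 1" by (simp add: stern.simps)
lemma stern_even: "stern (2*m) = stern m"
  by (cases "m=0") (simp_all add: stern.simps[of "2*m"])
lemma stern_Suc0[simp]: "stern (Suc 0) = 1" by (simp add: stern.simps)
lemma stern_odd: "stern (2*m+1) = stern m + stern (m+1)"
proof (cases "m=0")
  case True
  then show ?thesis by simp
next
  case False
  have "stern (2*m+1) = (if 2*m+1 = 0 then 0 else if 2*m+1 = 1 then 1
              else if even (2*m+1) then stern ((2*m+1) div 2)
              else stern ((2*m+1) div 2) + stern ((2*m+1) div 2 + 1))"
    by (rule stern.simps)
  also have "\<dots> = stern m + stern (m+1)" using False by simp
  finally show ?thesis .
qed
lemma stern_odd': "stern (Suc (2*m)) = stern m + stern (Suc m)"
  using stern_odd[of m] by simp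
lemma stern_even2: "stern (Suc (Suc (2*m))) = stern (m+1)"
  using stern_even[of "m+1"] by simp

lemma bin_val_snoc: "bin_val (x@[b]) = 2*bin_val x + (if b then 1 else 0)"
  by (simp add: bin_val_def)

lemma run_stern: "run (0,1) x = (stern (bin_val x), stern (bin_val x + 1))"
proof (induction x rule: rev_induct)
  case Nil
  then show ?case by (simp add: bin_val_def)
next
  case (snoc b x)
  then show ?case
    by (cases b) (auto simp: bin_val_snoc stp_def stern_even stern_odd' stern_even2)
qed

lemma s_run: "s_stern (bin_val x) = snd (run (0,1) x)"
proof -
  have "snd (run (0,1) x) = stern (bin_val x + 1)" by (simp only: run_stern snd_conv)
  thus ?thesis by (simp add: s_stern_def)
qed

abbreviation pw :: "nat \<Rightarrow> bool list" where "pw k \<equiv> pow_str [True,False] k"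

lemma pow_0[simp]: "pow_str w 0 = []" by (simp add: pow_str_def)
lemma pow_Suc: "pow_str w (Suc k) = w @ pow_str w k" by (simp add: pow_str_def)
lemma pow_Suc_right: "pow_str w (Suc k) = pow_str w k @ w"
  by (simp add: pow_str_def replicate_append_same[symmetric])
lemma pow_len[simp]: "length (pow_str w k) = k * length w"
  by (induction k) (simp_all add: pow_Suc)
lemma pow_count[simp]: "count_list (pow_str w k) b = k * count_list w b"
  by (induction k) (simp_all add: pow_Suc)

lemma run10: "fst (run (p,q) (pw k)) + fib (2*k) * p = fib (2*k+1) * p + fib (2*k) * q
   \<and> snd (run (p,q) (pw k)) = fib (2*k) * p + fib (2*k+1) * q"
proof (induction k arbitrary: p q)
  case 0
  then show ?case by simp
next
  case (Suc k)
  have r: "run (p,q) (pw (Suc k)) = run (p+q, p+2*q) (pw k)"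
    by (simp add: pow_Suc stp_def mult_2 add.assoc)
  have f2: "fib (2*Suc k) = fib (2*k+1) + fib (2*k)"
    by (simp add: numeral_2_eq_2)
  have f3: "fib (2*Suc k+1) = fib (2*k+1) + fib (2*Suc k)"
    by (simp add: numeral_2_eq_2)
  from Suc[of "p+q" "p+2*q"] show ?case unfolding r f3 f2
    by (simp add: algebra_simps)
qed

definition invp :: "nat \<times> nat \<Rightarrow> int" where
  "invp st = (case st of (p,q) \<Rightarrow> int q^2 - int p * int q - int p^2)"

lemma inv10: "invp (run st (pw k)) = invp st"
proof (induction k arbitrary: st)
  case 0
  then show ?case by simp
next
  case (Suc k)
  obtain p q where st: "st = (p,q)" by force
  have "invp (run st (pw (Suc k))) = invp (p+q, p+2*q)"
    using Suc by (simp add: pow_Suc stp_def st mult_2 add.assoc)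
  also have "\<dots> = invp st" by (simp add: invp_def st power2_eq_square algebra_simps)
  finally show ?case .
qed

lemma inv0: "invp (stp st False) \<ge> invp st"
proof -
  obtain p q where st: "st = (p,q)" by force
  show ?thesis by (simp add: invp_def st stp_def power2_eq_square algebra_simps)
qed

lemma key_ineq:
  assumes "invp (p,q) > 0"
  shows "fib (2*C+2) * p \<le> fib (2*C+1) * q"
proof -
  define a where "a = int (fib (2*C+1))"
  define b where "b = int (fib (2*C+2))"
  have apos: "a > 0" unfolding a_def by (simp add: fib_neq_0_nat)
  have ba: "b \<ge> a" unfolding a_def b_def by (simp add: fib_mono)
  have cas: "b^2 - a*b - a^2 = -1"
  proof -
    have c: "int (fib (Suc (Suc (2*C))) * fib (2*C)) - int((fib (Suc (2*C)))\<^sup>2) = - ((-1)^(2*C))"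
      by (rule fib_Cassini_int)
    have e: "fib (2*C+2) = fib (2*C+1) + fib (2*C)" by (simp add: numeral_2_eq_2)
    have "int (fib (2*C)) = b - a" unfolding a_def b_def e by simp
    with c show ?thesis unfolding a_def[symmetric] b_def[symmetric]
      by (simp add: a_def b_def power2_eq_square algebra_simps)
  qed
  define P where "P = int p"
  define Q where "Q = int q"
  have iv: "Q^2 - P*Q - P^2 > 0" using assms by (simp add: invp_def P_def Q_def)
  have id: "(Q*a - P*b)*(Q*a+P*b-P*a) = a^2*(Q^2-P*Q-P^2) - P^2*(b^2-a*b-a^2)"
    by (simp add: algebra_simps power2_eq_square)
  have pos1: "a^2*(Q^2-P*Q-P^2) > 0" using apos iv by simp
  have pos2: "0 \<le> -(P^2*(b^2-a*b-a^2))" using cas by simp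
  have pos: "a^2*(Q^2-P*Q-P^2) - P^2*(b^2-a*b-a^2) > 0"
    using pos1 pos2 by linarith
  have P0: "P \<ge> 0" "Q \<ge> 0" by (simp_all add: P_def Q_def)
  have nn: "Q*a+P*b-P*a \<ge> 0"
  proof -
    have "P*b \<ge> P*a" using ba P0 by (simp add: mult_left_mono)
    moreover have "Q*a \<ge> 0" using P0 apos by simp
    ultimately show ?thesis by linarith
  qed
  have "Q*a - P*b > 0"
  proof (rule ccontr)
    assume "\<not> Q*a - P*b > 0"
    hence "(Q*a - P*b)*(Q*a+P*b-P*a) \<le> 0" using nn by (simp add: mult_nonpos_nonneg)
    with id pos show False by linarith
  qed
  hence "int (fib (2*C+2) * p) \<le> int (fib (2*C+1) * q)"
    by (simp add: a_def b_def P_def Q_def algebra_simps)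
  thus ?thesis by (simp only: of_nat_le_iff)
qed

definition w :: "nat \<Rightarrow> nat \<Rightarrow> nat \<Rightarrow> bool list" where
  "w A B C = pw A @ [False] @ pw B @ [False] @ pw C"

definition V :: "nat \<Rightarrow> nat \<Rightarrow> nat \<Rightarrow> nat" where
  "V A B C = snd (run (0,1) (w A B C))"

lemma swap_step: "V A B (Suc C) \<le> V A (Suc B) C"
proof -
  define st where "st = run (0,1) (pw A @ [False] @ pw B)"
  obtain p q where st': "st = (p,q)" by force
  have "invp st \<ge> invp (0,1)"
  proof -
    have "invp st = invp (stp (run (0,1) (pw A)) False)"
      unfolding st_def by (simp add: inv10)
    also have "\<dots> \<ge> invp (run (0,1) (pw A))" by (rule inv0)
    finally show ?thesis by (simp add: inv10)
  qed
  hence ip: "invp (p,q) > 0" by (simp add: invp_def st')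
  have e1': "V A B (Suc C) = snd (run (run st [False,True,False]) (pw C))"
    unfolding V_def w_def st_def by (simp add: pow_Suc)
  have e2': "V A (Suc B) C = snd (run (run st [True,False,False]) (pw C))"
    unfolding V_def w_def st_def by (simp add: pow_Suc_right)
  have r1: "run st [False,True,False] = (2*p+q, 3*p+2*q)" by (simp add: st' stp_def)
  have r2: "run st [True,False,False] = (p+q, 2*p+3*q)" by (simp add: st' stp_def)
  have e1: "V A B (Suc C) = snd (run (2*p+q, 3*p+2*q) (pw C))" using e1' r1 by simp
  have e2: "V A (Suc B) C = snd (run (p+q, 2*p+3*q) (pw C))" using e2' r2 by simp
  have k: "fib (2*C+2) * p \<le> fib (2*C+1) * q" by (rule key_ineq[OF ip])
  have f2: "fib (2*C+2) = fib (2*C+1) + fib (2*C)" by (simp add: numeral_2_eq_2)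
  show ?thesis unfolding e1 e2 using run10[of "2*p+q" "3*p+2*q" C] run10[of "p+q" "2*p+3*q" C] k
    unfolding f2 by (simp add: algebra_simps)
qed

lemma reduce: "V A B C \<le> V A (B+C) 0"
proof (induction C arbitrary: B)
  case 0
  then show ?case by simp
next
  case (Suc C)
  have "V A B (Suc C) \<le> V A (Suc B) C" by (rule swap_step)
  also have "\<dots> \<le> V A (Suc B + C) 0" by (rule Suc)
  finally show ?case by simp
qed

lemma V0: "V A B 0 = fib (2*B+1) * fib (2*A) + fib (2*B+2) * fib (2*A+2)"
proof -
  define p where "p = fst (run (0,1) (pw A))"
  define q where "q = snd (run (0,1) (pw A))"
  have pq: "p = fib (2*A)" "q = fib (2*A+1)" using run10[of 0 1 A] by (simp_all add: p_def q_def)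
  have r: "run (0,1) (pw A) = (p,q)" by (simp add: p_def q_def)
  define p' where "p' = fst (run (p, p+q) (pw B))"
  define q' where "q' = snd (run (p, p+q) (pw B))"
  have h: "p' + fib (2*B) * p = fib (2*B+1) * p + fib (2*B) * (p+q)"
       "q' = fib (2*B) * p + fib (2*B+1) * (p+q)"
    using run10[of p "p+q" B] by (simp_all add: p'_def q'_def)
  have ex: "run (0,1) (w A B 0) = stp (run (stp (run (0,1) (pw A)) False) (pw B)) False"
    by (simp add: w_def)
  have s1: "stp (p,q) False = (p, p+q)" by (simp add: stp_def)
  have s2: "run (p, p+q) (pw B) = (p',q')" by (simp add: p'_def q'_def)
  have s3: "stp (p',q') False = (p', p'+q')" by (simp add: stp_def)
  have "V A B 0 = p' + q'"
    unfolding V_def ex r s1 s2 s3 by simp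
  also have "\<dots> = fib (2*B+1) * p + (fib (2*B) + fib (2*B+1)) * (p+q)"
    using h by (simp add: algebra_simps)
  also have "\<dots> = fib (2*B+1) * fib (2*A) + fib (2*B+2) * fib (2*A+2)"
    by (simp add: pq numeral_2_eq_2 ac_simps)
  finally show ?thesis .
qed

lemma closed: "fib (2*B+1) * fib (2*A) + fib (2*B+2) * fib (2*A+2)
   = fib (2*(A+B)+2) + fib (2*A) * fib (2*B+2)"
proof -
  have fa: "fib (Suc ((2*A+1) + 2*B)) = fib (Suc (2*B)) * fib (Suc (2*A+1)) + fib (2*B) * fib (2*A+1)"
    by (rule fib_add)
  have e1: "fib (2*A+2) = fib (2*A+1) + fib (2*A)" by (simp add: numeral_2_eq_2)
  have e2: "fib (2*B+2) = fib (2*B+1) + fib (2*B)" by (simp add: numeral_2_eq_2)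
  have e3: "Suc ((2*A+1) + 2*B) = 2*(A+B)+2" by simp
  show ?thesis using fa unfolding e3 e1 e2 by (simp add: algebra_simps)
qed

lemma dOc: "int (fib (m+1) * fib (m+e)) - int (fib m * fib (m+e+1)) = (-1)^m * int (fib e)"
proof (induction m)
  case 0
  then show ?case by simp
next
  case (Suc m)
  have a: "fib (Suc m + 1) = fib (m+1) + fib m" by simp
  have b: "fib (Suc m + e + 1) = fib (m+e+1) + fib (m+e)" by simp
  have c: "Suc m + e = m+e+1" by simp
  show ?case unfolding a b c using Suc by (simp add: algebra_simps)
qed

lemma fmono: "fib (2*i) * fib (2*(i+d+2)) \<le> fib (2*(i+1)) * fib (2*(i+d+1))"
proof -
  have D: "int (fib (2*i+1) * fib (2*i+(2*d+2))) - int (fib (2*i) * fib (2*i+(2*d+2)+1)) = int (fib (2*d+2))"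
    using dOc[of "2*i" "2*d+2"] by simp
  have e1: "fib (2*(i+1)) = fib (2*i+1) + fib (2*i)" by (simp add: numeral_2_eq_2)
  have e2: "fib (2*(i+d+2)) = fib (2*i+(2*d+2)+1) + fib (2*i+(2*d+2))"
    by (simp add: numeral_2_eq_2 algebra_simps)
  have e3: "2*(i+d+1) = 2*i+(2*d+2)" by simp
  have "int (fib (2*i) * fib (2*(i+d+2))) \<le> int (fib (2*(i+1)) * fib (2*(i+d+1)))"
    using D unfolding e1 e2 e3 by (simp add: algebra_simps)
  then show ?thesis by (simp only: of_nat_le_iff)
qed

lemma bal_aux: "i + d = j \<Longrightarrow> fib (2*i) * fib (2*j) \<le> fib (2*((i+j) div 2)) * fib (2*((i+j) - (i+j) div 2))"
proof (induction d arbitrary: i j rule: less_induct)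
  case (less d)
  show ?case
  proof (cases "d \<le> 1")
    case True
    then have "(i+j) div 2 = i" "(i+j) - (i+j) div 2 = j" using less.prems by auto
    then show ?thesis by simp
  next
    case False
    define d' where "d' = d - 2"
    have d: "d = d' + 2" using False unfolding d'_def by simp
    have jeq: "j = i + d' + 2" using less.prems d by simp
    have "fib (2*i) * fib (2*j) \<le> fib (2*(i+1)) * fib (2*(i+d'+1))"
      unfolding jeq by (rule fmono)
    also have "\<dots> \<le> fib (2*(((i+1)+(i+d'+1)) div 2)) * fib (2*(((i+1)+(i+d'+1)) - ((i+1)+(i+d'+1)) div 2))"
      by (rule less.IH[of d']) (use d in auto)
    also have "((i+1)+(i+d'+1)) = i + j" using less.prems d by simp
    finally show ?thesis .
  qed
qed

lemma bal: "i + j = S \<Longrightarrow> fib (2*i) * fib (2*j) \<le> fib (2*(S div 2)) * fib (2*(S - S div 2))"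
proof (cases "i \<le> j")
  case True
  assume "i + j = S"
  then show ?thesis using bal_aux[of i "j-i" j] True by simp
next
  case False
  assume "i + j = S"
  then show ?thesis using bal_aux[of j "i-j" i] False by (simp add: mult.commute add.commute)
qed


lemma Vmax: "V A B C \<le> fib (2*(A+B+C)+2) + fib (2*((A+B+C+1) div 2)) * fib (2*((A+B+C+1) - (A+B+C+1) div 2))"
proof -
  have "V A B C \<le> V A (B+C) 0" by (rule reduce)
  also have "\<dots> = fib (2*(A+(B+C))+2) + fib (2*A) * fib (2*(B+C)+2)"
    by (simp only: V0 closed)
  also have "fib (2*A) * fib (2*(B+C)+2) = fib (2*A) * fib (2*(B+C+1))" by simp
  also have "\<dots> \<le> fib (2*((A+B+C+1) div 2)) * fib (2*((A+B+C+1) - (A+B+C+1) div 2))"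
    by (rule bal) simp
  finally show ?thesis by (simp add: add.assoc)
qed

lemma rep_only: "\<forall>b\<in>set bs. b = [True,False] \<or> b = [True,False,False] \<Longrightarrow>
   [True,False,False] \<notin> set bs \<Longrightarrow> bs = replicate (length bs) [True,False]"
  by (induction bs) auto

lemma decomp:
  assumes "\<forall>b\<in>set bs. b = [True,False] \<or> b = [True,False,False]"
    and "count_list bs [True,False,False] = 2"
  shows "\<exists>a b c. bs = replicate a [True,False] @ [True,False,False] # replicate b [True,False]
            @ [True,False,False] # replicate c [True,False]"
proof -
  let ?v = "[True,False,False]"
  have "?v \<in> set bs" using assms(2) count_list_0_iff[of bs ?v] by auto
  then obtain ys zs where 1: "bs = ys @ ?v # zs" "?v \<notin> set ys" using split_list_first by metis
  have c1: "count_list zs ?v = 1" using assms(2) 1 count_list_0_iff[of ys ?v] by simp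
  hence "?v \<in> set zs" using count_list_0_iff[of zs ?v] by auto
  then obtain ys2 zs2 where 2: "zs = ys2 @ ?v # zs2" "?v \<notin> set ys2" using split_list_first by metis
  have "count_list zs2 ?v = 0" using c1 2 count_list_0_iff[of ys2 ?v] by simp
  hence 3: "?v \<notin> set zs2" using count_list_0_iff by metis
  have "ys = replicate (length ys) [True,False]" using rep_only[of ys] 1 assms(1) by auto
  moreover have "ys2 = replicate (length ys2) [True,False]" using rep_only[of ys2] 1 2 assms(1) by auto
  moreover have "zs2 = replicate (length zs2) [True,False]" using rep_only[of zs2] 1 2 3 assms(1) by auto
  ultimately show ?thesis using 1 2 by metis
qed

lemma delta_append: "delta (x@y) = delta x + delta y"
  by (simp add: delta_def)

lemma delta_concat: "\<forall>b\<in>set bs. b = [True,False] \<or> b = [True,False,False] \<Longrightarrow>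
   delta (concat bs) = int (count_list bs [True,False,False])"
proof (induction bs)
  case Nil
  then show ?case by (simp add: delta_def)
next
  case (Cons b bs)
  have IH: "delta (concat bs) = int (count_list bs [True,False,False])" using Cons by simp
  have "b = [True,False] \<or> b = [True,False,False]" using Cons.prems by simp
  then show ?case
  proof
    assume b: "b = [True,False]"
    have "delta b = 0" unfolding b by (simp add: delta_def)
    moreover have "delta (concat (b#bs)) = delta b + delta (concat bs)"
      by (simp only: concat.simps delta_append)
    ultimately show ?thesis using IH b by simp
  next
    assume b: "b = [True,False,False]"
    have "delta b = 1" unfolding b by (simp add: delta_def)
    moreover have "delta (concat (b#bs)) = delta b + delta (concat bs)"
      by (simp only: concat.simps delta_append)
    ultimately show ?thesis using IH b by simp
  qed
qed

lemma concat_rep: "concat (replicate a x) = pow_str x a" by (simp add: pow_str_def)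

lemma x_form: "inB x \<Longrightarrow> delta x = 2 \<Longrightarrow> \<exists>A B C. x = w (Suc A) (Suc B) C"
proof -
  assume "inB x" "delta x = 2"
  then obtain bs where bs: "(\<forall>b\<in>set bs. b = [True, False] \<or> b = [True, False, False])" "x = concat bs"
    unfolding inB_def by blast
  have "count_list bs [True,False,False] = 2" using delta_concat[OF bs(1)] bs(2) \<open>delta x = 2\<close> by simp
  then obtain a b c where "bs = replicate a [True,False] @ [True,False,False] # replicate b [True,False]
            @ [True,False,False] # replicate c [True,False]" using decomp bs(1) by blast
  then have "x = w (Suc a) (Suc b) c" using bs(2) by (simp add: concat_rep w_def pow_Suc_right)
  thus ?thesis by blast
qed

lemma w_len: "length (w A B C) = 2*(A+B+C)+2" by (simp add: w_def)
lemma w_delta: "delta (w A B C) = 2" by (simp add: w_def delta_def)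
lemma w_inB: "inB (w (Suc a) (Suc b) c)"
proof -
  let ?bs = "replicate a [True,False] @ [True,False,False] # replicate b [True,False]
            @ [True,False,False] # replicate c [True,False]"
  have "w (Suc a) (Suc b) c = concat ?bs" by (simp add: concat_rep w_def pow_Suc_right)
  moreover have "\<forall>b\<in>set ?bs. b = [True,False] \<or> b = [True,False,False]" by auto
  ultimately show ?thesis unfolding inB_def by blast
qed

lemma sV: "s_stern (bin_val (w A B C)) = V A B C" by (simp add: s_run V_def)

theorem mainTheorem9:
  fixes l :: nat
  assumes "even l" and "l \<ge> 6"
  shows "(\<forall>n. l = 4 * n \<longrightarrow>
            (let x0 = pow_str [True, False] n @ [False] @ pow_str [True, False] (n - 1) @ [False]
             in inB x0 \<and> length x0 = l \<and> delta x0 = 2 \<and>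
                s_stern (bin_val x0) = fib (4 * n) + (fib (2 * n))\<^sup>2 \<and>
                (\<forall>x. inB x \<and> length x = l \<and> delta x = 2 \<longrightarrow>
                     s_stern (bin_val x) \<le> fib (4 * n) + (fib (2 * n))\<^sup>2)))
       \<and> (\<forall>n. l = 4 * n + 2 \<longrightarrow>
            (let x0 = pow_str [True, False] n @ [False] @ pow_str [True, False] n @ [False]
             in inB x0 \<and> length x0 = l \<and> delta x0 = 2 \<and>
                s_stern (bin_val x0) = fib (4 * n + 2) + fib (2 * n) * fib (2 * n + 2) \<and>
                (\<forall>x. inB x \<and> length x = l \<and> delta x = 2 \<longrightarrow>
                     s_stern (bin_val x) \<le> fib (4 * n + 2) + fib (2 * n) * fib (2 * n + 2))))"
proof (intro conjI allI impI)
  fix n assume ln: "l = 4 * n"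
  have n2: "n \<ge> 2" using ln assms(2) by simp
  define a where "a = n - 1"
  define b where "b = n - 2"
  have ab: "n = Suc a" "n - 1 = Suc b" using n2 unfolding a_def b_def by simp_all
  have x0: "pow_str [True, False] n @ [False] @ pow_str [True, False] (n - 1) @ [False] = w n (n-1) 0"
    by (simp add: w_def)
  have val: "V n (n-1) 0 = fib (4 * n) + (fib (2 * n))\<^sup>2"
  proof -
    have "V n (n-1) 0 = fib (2*(n+(n-1))+2) + fib (2*n) * fib (2*(n-1)+2)"
      by (simp only: V0 closed)
    moreover have "2*(n+(n-1))+2 = 4*n" "2*(n-1)+2 = 2*n" using ab by auto
    ultimately show ?thesis by (simp only: power2_eq_square)
  qed
  have bound: "s_stern (bin_val x) \<le> fib (4 * n) + (fib (2 * n))\<^sup>2"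
    if hx: "inB x \<and> length x = l \<and> delta x = 2" for x
  proof -
    obtain A B C where x: "x = w (Suc A) (Suc B) C" using x_form hx by blast
    have N: "Suc A + Suc B + C + 1 = 2*n" using hx ln unfolding x w_len by simp
    have "s_stern (bin_val x) = V (Suc A) (Suc B) C" by (simp add: x sV)
    also have "\<dots> \<le> fib (2*(Suc A + Suc B + C)+2) + fib (2*((Suc A + Suc B + C+1) div 2)) * fib (2*((Suc A + Suc B + C+1) - (Suc A + Suc B + C+1) div 2))"
      by (rule Vmax)
    also have "\<dots> = fib (4 * n) + (fib (2 * n))\<^sup>2"
    proof -
      have e1: "(Suc A + Suc B + C+1) div 2 = n" using N by simp
      have e2: "2*(Suc A + Suc B + C)+2 = 4*n" using N by simp
      have e3: "2*((Suc A + Suc B + C+1) - n) = 2*n" using N by simp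
      show ?thesis unfolding e1 e2 e3 power2_eq_square ..
    qed
    finally show ?thesis .
  qed
  show "let x0 = pow_str [True, False] n @ [False] @ pow_str [True, False] (n - 1) @ [False]
             in inB x0 \<and> length x0 = l \<and> delta x0 = 2 \<and>
                s_stern (bin_val x0) = fib (4 * n) + (fib (2 * n))\<^sup>2 \<and>
                (\<forall>x. inB x \<and> length x = l \<and> delta x = 2 \<longrightarrow>
                     s_stern (bin_val x) \<le> fib (4 * n) + (fib (2 * n))\<^sup>2)"
    unfolding Let_def x0 using bound val w_inB[of a b 0] ab ln
    by (auto simp: w_len w_delta sV)
next
  fix n assume ln: "l = 4 * n + 2"
  then obtain a where ab: "n = Suc a" using assms(2)
    by (cases n) auto
  have x0: "pow_str [True, False] n @ [False] @ pow_str [True, False] n @ [False] = w n n 0"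
    by (simp add: w_def)
  have val: "V n n 0 = fib (4 * n + 2) + fib (2 * n) * fib (2 * n + 2)"
  proof -
    have "V n n 0 = fib (2*(n+n)+2) + fib (2*n) * fib (2*n+2)"
      by (simp only: V0 closed)
    moreover have "2*(n+n)+2 = 4*n+2" by auto
    ultimately show ?thesis by (simp only:)
  qed
  have bound: "s_stern (bin_val x) \<le> fib (4 * n + 2) + fib (2 * n) * fib (2 * n + 2)"
    if hx: "inB x \<and> length x = l \<and> delta x = 2" for x
  proof -
    obtain A B C where x: "x = w (Suc A) (Suc B) C" using x_form hx by blast
    have N: "Suc A + Suc B + C + 1 = 2*n+1" using hx ln unfolding x w_len by simp
    have "s_stern (bin_val x) = V (Suc A) (Suc B) C" by (simp add: x sV)
    also have "\<dots> \<le> fib (2*(Suc A + Suc B + C)+2) + fib (2*((Suc A + Suc B + C+1) div 2)) * fib (2*((Suc A + Suc B + C+1) - (Suc A + Suc B + C+1) div 2))"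
      by (rule Vmax)
    also have "\<dots> = fib (4 * n + 2) + fib (2 * n) * fib (2 * n + 2)"
    proof -
      have e1: "(Suc A + Suc B + C+1) div 2 = n" using N by simp
      have e2: "2*(Suc A + Suc B + C)+2 = 4*n+2" using N by simp
      have e3: "2*((Suc A + Suc B + C+1) - n) = 2*n+2" using N by simp
      show ?thesis unfolding e1 e2 e3 ..
    qed
    finally show ?thesis .
  qed
  show "let x0 = pow_str [True, False] n @ [False] @ pow_str [True, False] n @ [False]
             in inB x0 \<and> length x0 = l \<and> delta x0 = 2 \<and>
                s_stern (bin_val x0) = fib (4 * n + 2) + fib (2 * n) * fib (2 * n + 2) \<and>
                (\<forall>x. inB x \<and> length x = l \<and> delta x = 2 \<longrightarrow>
                     s_stern (bin_val x) \<le> fib (4 * n + 2) + fib (2 * n) * fib (2 * n + 2))"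
    unfolding Let_def x0 using bound val w_inB[of a a 0] ab ln
    by (auto simp: w_len w_delta sV)
qed

end
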